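(* Let $G=\langle a,b\mid aba^{-1}=b^{-1}\rangle$ (the fundamental group of the Klein bottle). For $d\geq1$ put $$a_d=\begin{cases}1 & d\text{ odd},\\ \frac{d+6}{4} & d\equiv 2 \pmod 4,\\ \frac{d+4}{4} & d\equiv 0\pmod 4.\end{cases}$$ Then for every $n\geq1$ the number of conjugacy classes of subgroups of index $n$ in $G$ equals $\sum_{d\mid n}a_d$. *)

theory Defs
  imports "HOL-Algebra.Coset"
begin

text \<open>Concrete model of G = <a,b | a b a^-1 = b^-1>: the pair (k, m) stands for b^k a^m.
  Multiplication: (b^k a^m)(b^l a^n) = b^(k + (-1)^m l) a^(m+n).\<close>

definition klein_group :: "(int \<times> int) monoid" where
  "klein_group = \<lparr> carrier = UNIV,
     mult = (\<lambda>(k, m) (l, n). (k + (if even m then l else - l), m + n)),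
     one = (0, 0) \<rparr>"

definition klein_a :: "int \<times> int" where "klein_a = (0, 1)"
definition klein_b :: "int \<times> int" where "klein_b = (1, 0)"

definition subgroups_of_index :: "('g, 'c) monoid_scheme \<Rightarrow> nat \<Rightarrow> 'g set set" where
  "subgroups_of_index G n = {H. subgroup H G \<and> card (RCOSETS G H) = n}"

definition conjugate_subgroups :: "('g, 'c) monoid_scheme \<Rightarrow> 'g set \<Rightarrow> 'g set \<Rightarrow> bool" where
  "conjugate_subgroups G H K \<longleftrightarrow>
     (\<exists>g \<in> carrier G. K = (\<lambda>h. g \<otimes>\<^bsub>G\<^esub> h \<otimes>\<^bsub>G\<^esub> inv\<^bsub>G\<^esub> g) ` H)"

definition num_conj_classes_index :: "('g, 'c) monoid_scheme \<Rightarrow> nat \<Rightarrow> nat" where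
  "num_conj_classes_index G n =
     card (subgroups_of_index G n // {(H, K). conjugate_subgroups G H K})"

definition klein_a_seq :: "nat \<Rightarrow> nat" where
  "klein_a_seq d = (if odd d then 1
                    else if d mod 4 = 2 then (d + 6) div 4
                    else (d + 4) div 4)"

end

theory Submission
  imports Defs
begin
abbreviation KG where "KG \<equiv> klein_group"

lemma KG_carrier[simp]: "carrier KG = UNIV"
  by (simp add: klein_group_def)
lemma KG_mult[simp]: "(k, m) \<otimes>\<^bsub>KG\<^esub> (l, n) = (k + (if even m then l else - l), m + n)"
  by (simp add: klein_group_def)
lemma KG_one[simp]: "\<one>\<^bsub>KG\<^esub> = (0, 0)"
  by (simp add: klein_group_def)

lemma KG_mult': "x \<otimes>\<^bsub>KG\<^esub> y = (fst x + (if even (snd x) then fst y else - fst y), snd x + snd y)"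
  by (cases x; cases y) simp

lemma KG_group: "group KG"
proof (rule groupI)
  fix x y z :: "int \<times> int"
  show "x \<otimes>\<^bsub>KG\<^esub> y \<otimes>\<^bsub>KG\<^esub> z = x \<otimes>\<^bsub>KG\<^esub> (y \<otimes>\<^bsub>KG\<^esub> z)"
    by (cases x; cases y; cases z) auto
next
  fix x :: "int \<times> int"
  show "\<one>\<^bsub>KG\<^esub> \<otimes>\<^bsub>KG\<^esub> x = x" by (cases x) simp
  show "\<exists>y\<in>carrier KG. y \<otimes>\<^bsub>KG\<^esub> x = \<one>\<^bsub>KG\<^esub>"
    by (cases x) (rule bexI[of _ "(if even (snd x) then - fst x else fst x, - snd x)"], auto)
qed auto

interpretation KG: group KG by (rule KG_group)

lemma KG_inv[simp]: "inv\<^bsub>KG\<^esub> (k, m) = (if even m then - k else k, - m)"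
  by (rule KG.inv_equality) auto

definition tw :: "nat \<Rightarrow> int \<Rightarrow> int \<Rightarrow> int" where
  "tw s t j = (if even s then j * t else if odd j then t else 0)"

definition sub :: "nat \<Rightarrow> nat \<Rightarrow> int \<Rightarrow> (int \<times> int) set" where
  "sub r s t = {(k, m). int s dvd m \<and> int r dvd (k - tw s t (m div int s))}"

lemma tw_0[simp]: "tw s t 0 = 0" by (simp add: tw_def)
lemma tw_1[simp]: "tw s t 1 = t" by (simp add: tw_def)

lemma sub_mem: "0 < s \<Longrightarrow> (k, int s * j) \<in> sub r s t \<longleftrightarrow> int r dvd (k - tw s t j)"
  by (simp add: sub_def)

lemma sub_memE:
  assumes "x \<in> sub r s t" "0 < s"
  obtains k j where "x = (k, int s * j)" "int r dvd (k - tw s t j)"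
  using assms unfolding sub_def by (auto elim!: dvdE)

lemma sub_subgroup:
  assumes s: "0 < s"
  shows "subgroup (sub r s t) KG"
proof (rule KG.subgroupI)
  show "sub r s t \<noteq> {}"
  proof -
    have "(0, 0) \<in> sub r s t" unfolding sub_def tw_def by simp
    then show ?thesis by blast
  qed
next
  fix x assume "x \<in> sub r s t"
  then obtain k j where x: "x = (k, int s * j)" and d: "int r dvd (k - tw s t j)"
    using sub_memE s by blast
  have "int r dvd ((if even (int s * j) then - k else k) - tw s t (- j))"
  proof (cases "even s")
    case True
    then have "(if even (int s * j) then - k else k) - tw s t (- j) = - (k - tw s t j)"
      by (simp add: tw_def)
    then show ?thesis using d by (metis dvd_minus_iff)
  next
    case False
    show ?thesis
    proof (cases "even j")
      case True
      then have "(if even (int s * j) then - k else k) - tw s t (- j) = - (k - tw s t j)"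
        by (simp add: tw_def)
      then show ?thesis using d by (metis dvd_minus_iff)
    next
      case False
      then have "(if even (int s * j) then - k else k) - tw s t (- j) = (k - tw s t j)"
        using \<open>odd s\<close> by (simp add: tw_def)
      then show ?thesis using d by simp
    qed
  qed
  then show "inv\<^bsub>KG\<^esub> x \<in> sub r s t"
    using sub_mem[OF s, of _ "- j"] x by simp
next
  fix x y assume "x \<in> sub r s t" "y \<in> sub r s t"
  then obtain k j k' j' where x: "x = (k, int s * j)" and d: "int r dvd (k - tw s t j)"
     and y: "y = (k', int s * j')" and d': "int r dvd (k' - tw s t j')"
    using sub_memE s by metis
  have "int r dvd ((k + (if even (int s * j) then k' else - k')) - tw s t (j + j'))"
  proof (cases "even s \<or> even j")
    case True
    then have eq: "(k + (if even (int s * j) then k' else - k')) - tw s t (j + j') = (k - tw s t j) + (k' - tw s t j')"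
      by (auto simp: tw_def algebra_simps)
    show ?thesis unfolding eq using d d' by (rule dvd_add)
  next
    case False
    then have eq: "(k + (if even (int s * j) then k' else - k')) - tw s t (j + j') = (k - tw s t j) - (k' - tw s t j')"
      by (auto simp: tw_def algebra_simps)
    show ?thesis unfolding eq using d d' by (rule dvd_diff)
  qed
  then show "x \<otimes>\<^bsub>KG\<^esub> y \<in> sub r s t"
    using sub_mem[OF s, of _ "j + j'"] x y by (simp add: algebra_simps)
qed simp

lemma rcos_eq_iff:
  assumes "subgroup H KG"
  shows "(H #>\<^bsub>KG\<^esub> x = H #>\<^bsub>KG\<^esub> y) \<longleftrightarrow> x \<otimes>\<^bsub>KG\<^esub> inv\<^bsub>KG\<^esub> y \<in> H"
proof
  assume "H #>\<^bsub>KG\<^esub> x = H #>\<^bsub>KG\<^esub> y"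
  then have "x \<in> H #>\<^bsub>KG\<^esub> y" using KG.rcos_self[OF _ assms, of x] by simp
  then show "x \<otimes>\<^bsub>KG\<^esub> inv\<^bsub>KG\<^esub> y \<in> H"
    using subgroup.rcos_module_imp[OF assms KG_group] by simp
next
  assume "x \<otimes>\<^bsub>KG\<^esub> inv\<^bsub>KG\<^esub> y \<in> H"
  then have "x \<in> H #>\<^bsub>KG\<^esub> y"
    using subgroup.rcos_module_rev[OF assms KG_group] by simp
  then show "H #>\<^bsub>KG\<^esub> x = H #>\<^bsub>KG\<^esub> y"
    using KG.repr_independence[OF _ _ assms] by simp
qed

lemma small_dvd:
  fixes d r :: int
  assumes "r dvd d" "\<bar>d\<bar> < r"
  shows "d = 0"
proof (rule ccontr)
  assume "d \<noteq> 0"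
  then have "\<bar>r\<bar> \<le> \<bar>d\<bar>" using dvd_imp_le_int assms(1) by blast
  then show False using assms(2) by simp
qed

lemma sub_index:
  assumes r: "0 < r" and s: "0 < s"
  shows "card (RCOSETS KG (sub r s t)) = r * s"
proof -
  let ?H = "sub r s t"
  let ?B = "{0..<int r} \<times> {0..<int s}"
  have sg: "subgroup ?H KG" using sub_subgroup[OF s] .
  have inj: "inj_on (\<lambda>x. ?H #>\<^bsub>KG\<^esub> x) ?B"
  proof (rule inj_onI)
    fix x y assume x: "x \<in> ?B" and y: "y \<in> ?B" and eq: "?H #>\<^bsub>KG\<^esub> x = ?H #>\<^bsub>KG\<^esub> y"
    obtain i j where xij: "x = (i, j)" by fastforce
    obtain i' j' where yij: "y = (i', j')" by fastforce
    have "x \<otimes>\<^bsub>KG\<^esub> inv\<^bsub>KG\<^esub> y \<in> ?H" using eq rcos_eq_iff[OF sg] by blast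
    then obtain z q where zq: "x \<otimes>\<^bsub>KG\<^esub> inv\<^bsub>KG\<^esub> y = (z, int s * q)" and dz: "int r dvd (z - tw s t q)"
      using sub_memE[OF _ s] by blast
    have "j - j' = int s * q" using zq xij yij by simp
    moreover have "0 \<le> j" "j < int s" "0 \<le> j'" "j' < int s" using x y xij yij by auto
    ultimately have "q = 0"
      using small_dvd[of "int s" "j - j'"] s by simp
    then have jj: "j = j'" using \<open>j - j' = int s * q\<close> by simp
    have "z = i - i'" using zq xij yij jj by (cases "even j'") auto
    then have "int r dvd (i - i')" using dz \<open>q = 0\<close> by simp
    moreover have "0 \<le> i" "i < int r" "0 \<le> i'" "i' < int r" using x y xij yij by auto
    ultimately have "i = i'"
      using small_dvd[of "int r" "i - i'"] by simp
    then show "x = y" using xij yij jj by simp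
  qed
  have img: "RCOSETS KG ?H = (\<lambda>x. ?H #>\<^bsub>KG\<^esub> x) ` ?B"
  proof
    show "(\<lambda>x. ?H #>\<^bsub>KG\<^esub> x) ` ?B \<subseteq> RCOSETS KG ?H"
      unfolding RCOSETS_def by auto
  next
    show "RCOSETS KG ?H \<subseteq> (\<lambda>x. ?H #>\<^bsub>KG\<^esub> x) ` ?B"
    proof
      fix C assume "C \<in> RCOSETS KG ?H"
      then obtain y where C: "C = ?H #>\<^bsub>KG\<^esub> y" unfolding RCOSETS_def by auto
      obtain k m where y: "y = (k, m)" by fastforce
      define j where "j = m mod int s"
      define q where "q = m div int s"
      have mq: "m - j = int s * q" unfolding j_def q_def by (simp add: minus_mod_eq_mult_div)
      define e :: int where "e = (if (even m \<longleftrightarrow> even j) then -1 else 1)"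
      define c where "c = e * (tw s t q - k)"
      define i where "i = c mod int r"
      have ee: "e * e = 1" unfolding e_def by simp
      have first: "fst (y \<otimes>\<^bsub>KG\<^esub> inv\<^bsub>KG\<^esub> (i, j)) = k + e * i"
        unfolding y e_def by (cases "even m"; cases "even j") auto
      have second: "snd (y \<otimes>\<^bsub>KG\<^esub> inv\<^bsub>KG\<^esub> (i, j)) = int s * q"
        unfolding y using mq by simp
      have "int r dvd (k + e * i - tw s t q)"
      proof -
        have ieq: "i = c - int r * (c div int r)" unfolding i_def by (simp add: minus_div_mult_eq_mod [symmetric] algebra_simps)
        have "k + e * i - tw s t q = - (e * (c div int r)) * int r"
          using ieq ee unfolding c_def by algebra
        then show ?thesis by simp
      qed
      then have "y \<otimes>\<^bsub>KG\<^esub> inv\<^bsub>KG\<^esub> (i, j) \<in> ?H"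
        using sub_mem[OF s] first second by (metis prod.collapse)
      then have "C = ?H #>\<^bsub>KG\<^esub> (i, j)" using C rcos_eq_iff[OF sg] by blast
      moreover have "(i, j) \<in> ?B" unfolding i_def j_def using r s by auto
      ultimately show "C \<in> (\<lambda>x. ?H #>\<^bsub>KG\<^esub> x) ` ?B" by blast
    qed
  qed
  have "card (RCOSETS KG ?H) = card ?B" using img card_image[OF inj] by simp
  also have "\<dots> = r * s" by (simp add: card_cartesian_product)
  finally show ?thesis .
qed

lemma int_subgroup:
  fixes S :: "int set"
  assumes sub: "\<And>a b. a \<in> S \<Longrightarrow> b \<in> S \<Longrightarrow> a - b \<in> S"
    and d: "d \<in> S" "0 < d"
  shows "\<exists>r::nat. 0 < r \<and> S = {k. int r dvd k}"
proof -
  define r where "r = (LEAST n::nat. 0 < n \<and> int n \<in> S)"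
  have ex: "0 < nat d \<and> int (nat d) \<in> S" using d by simp
  have r: "0 < r \<and> int r \<in> S" unfolding r_def by (rule LeastI[of "\<lambda>n. 0 < n \<and> int n \<in> S", OF ex])
  have rmin: "\<And>n. 0 < n \<Longrightarrow> int n \<in> S \<Longrightarrow> r \<le> n" unfolding r_def by (rule Least_le) simp
  have z: "0 \<in> S" using sub[OF d(1) d(1)] by simp
  have neg: "\<And>a. a \<in> S \<Longrightarrow> - a \<in> S" using sub[OF z] by fastforce
  have add: "\<And>a b. a \<in> S \<Longrightarrow> b \<in> S \<Longrightarrow> a + b \<in> S"
    using sub neg by (metis diff_minus_eq_add)
  have multn: "int r * int c \<in> S" for c :: nat
    by (induction c) (auto simp: z r add distrib_left)
  have mult: "int r * c \<in> S" for c :: int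
  proof (cases "c \<ge> 0")
    case True then show ?thesis using multn[of "nat c"] by simp
  next
    case False then show ?thesis using neg[OF multn[of "nat (- c)"]] by simp
  qed
  have "S = {k. int r dvd k}"
  proof
    show "{k. int r dvd k} \<subseteq> S" using mult by auto
  next
    show "S \<subseteq> {k. int r dvd k}"
    proof
      fix k assume k: "k \<in> S"
      have "k mod int r = k - int r * (k div int r)" by (simp add: minus_div_mult_eq_mod [symmetric] algebra_simps)
      then have km: "k mod int r \<in> S" using sub[OF k mult] by simp
      have "k mod int r = 0"
      proof (rule ccontr)
        assume "k mod int r \<noteq> 0"
        moreover have "0 \<le> k mod int r" "k mod int r < int r" using r by auto
        ultimately have "r \<le> nat (k mod int r)" using rmin[of "nat (k mod int r)"] km by simp
        then show False using \<open>k mod int r < int r\<close> le_nat_iff[OF \<open>0 \<le> k mod int r\<close>] by simp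
      qed
      then show "k \<in> {k. int r dvd k}" by auto
    qed
  qed
  then show ?thesis using r by blast
qed

lemma tw_succ: "tw s t (j + 1) = tw s t j + (if even (int s * j) then t else - t)"
  by (auto simp: tw_def algebra_simps)

lemma tw_pred: "tw s t (j - 1) = tw s t j + (if even (int s * j) then (if even s then - t else t) else - (if even s then - t else t))"
  by (auto simp: tw_def algebra_simps)

lemma tw_mod: "int r dvd (t - t') \<Longrightarrow> int r dvd (tw s t j - tw s t' j)"
  by (auto simp: tw_def right_diff_distrib[symmetric])

lemma sub_mod:
  assumes "int r dvd (t - t')"
  shows "sub r s t = sub r s t'"
proof -
  have "int r dvd (k - tw s t j) \<longleftrightarrow> int r dvd (k - tw s t' j)" for k j
  proof -
    have "k - tw s t' j = (k - tw s t j) + (tw s t j - tw s t' j)" by simp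
    then show ?thesis using tw_mod[OF assms, of s j] by (metis dvd_add_left_iff)
  qed
  then show ?thesis unfolding sub_def by auto
qed

lemma pigeon:
  assumes fin: "finite (RCOSETS KG H)" "card (RCOSETS KG H) = n"
      and sg: "subgroup H KG"
      and f: "\<And>i. f i \<in> carrier KG"
  shows "\<exists>i j. i \<noteq> j \<and> i \<le> n \<and> j \<le> n \<and> f i \<otimes>\<^bsub>KG\<^esub> inv\<^bsub>KG\<^esub> f j \<in> H"
proof (rule ccontr)
  assume nt: "\<not> ?thesis"
  then have "inj_on (\<lambda>i. H #>\<^bsub>KG\<^esub> f i) {0..n}"
  proof (intro inj_onI)
    fix i j assume "i \<in> {0..n}" "j \<in> {0..n}" "H #>\<^bsub>KG\<^esub> f i = H #>\<^bsub>KG\<^esub> f j"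
    then show "i = j" using rcos_eq_iff[OF sg, of "f i" "f j"] nt by auto
  qed
  moreover have "(\<lambda>i. H #>\<^bsub>KG\<^esub> f i) ` {0..n} \<subseteq> RCOSETS KG H"
    unfolding RCOSETS_def by auto
  ultimately have "card {0..n} \<le> card (RCOSETS KG H)"
    using card_inj_on_le fin(1) by blast
  then show False using fin(2) by simp
qed

lemma classify:
  assumes sg: "subgroup H KG" and fin: "finite (RCOSETS KG H)"
  shows "\<exists>r s t. 0 < r \<and> 0 < s \<and> 0 \<le> t \<and> t < int r \<and> H = sub r s t"
proof -
  interpret H: subgroup H KG by (rule sg)
  have m: "a \<otimes>\<^bsub>KG\<^esub> b \<in> H" if "a \<in> H" "b \<in> H" for a b using that by simp
  have iv: "inv\<^bsub>KG\<^esub> a \<in> H" if "a \<in> H" for a using that by simp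
  define S1 where "S1 = {k. (k, 0) \<in> H}"
  define S2 where "S2 = {m. \<exists>k. (k, m) \<in> H}"
  obtain n where n: "card (RCOSETS KG H) = n" by blast
  obtain i j where ij: "i \<noteq> j" "(int i, 0) \<otimes>\<^bsub>KG\<^esub> inv\<^bsub>KG\<^esub> (int j, 0) \<in> H"
    using pigeon[OF fin n sg, of "\<lambda>i. (int i, 0)"] by auto
  then have "(int i - int j, 0) \<in> H" by simp
  then have d1: "int i - int j \<in> S1" "int j - int i \<in> S1"
    using iv[of "(int i - int j, 0)"] unfolding S1_def by auto
  have "\<exists>d. d \<in> S1 \<and> 0 < d"
    using ij(1) d1 by (cases "i < j") auto
  then obtain d where d: "d \<in> S1" "0 < d" by blast
  have S1sub: "a - b \<in> S1" if "a \<in> S1" "b \<in> S1" for a b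
    using m[OF _ iv, of "(a, 0)" "(b, 0)"] that unfolding S1_def by simp
  obtain r where r: "0 < r" "S1 = {k. int r dvd k}"
    using int_subgroup[OF S1sub d] by blast
  obtain i' j' where ij': "i' \<noteq> j'" "(0, int i') \<otimes>\<^bsub>KG\<^esub> inv\<^bsub>KG\<^esub> (0, int j') \<in> H"
    using pigeon[OF fin n sg, of "\<lambda>i. (0, int i)"] by auto
  then have "(0, int i' - int j') \<in> H" by (auto split: if_splits)
  then have d2: "int i' - int j' \<in> S2" "int j' - int i' \<in> S2"
    using iv[of "(0, int i' - int j')"] unfolding S2_def by auto
  have "\<exists>d. d \<in> S2 \<and> 0 < d"
    using ij'(1) d2 by (cases "i' < j'") auto
  then obtain d' where d': "d' \<in> S2" "0 < d'" by blast
  have S2sub: "a - b \<in> S2" if ha: "a \<in> S2" and hb: "b \<in> S2" for a b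
  proof -
    obtain ka kb where "(ka, a) \<in> H" "(kb, b) \<in> H" using ha hb unfolding S2_def by auto
    define p where "p = (ka, a) \<otimes>\<^bsub>KG\<^esub> inv\<^bsub>KG\<^esub> (kb, b)"
    have "p \<in> H" unfolding p_def by (rule m[OF _ iv]) fact+
    moreover have "snd p = a - b" unfolding p_def by simp
    ultimately have "(fst p, a - b) \<in> H" by (metis prod.collapse)
    then show ?thesis unfolding S2_def by auto
  qed
  obtain s where s: "0 < s" "S2 = {k. int s dvd k}"
    using int_subgroup[OF S2sub d'] by blast
  have "int s \<in> S2" using s by simp
  then obtain t0 where t0: "(t0, int s) \<in> H" unfolding S2_def by auto
  have ej: "(tw s t0 j, int s * j) \<in> H" for j
  proof (induction j rule: int_induct[where k = 0])
    case base
    then show ?case using H.one_closed by simp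
  next
    case (step1 j)
    have "(tw s t0 j, int s * j) \<otimes>\<^bsub>KG\<^esub> (t0, int s) \<in> H" using step1 t0 m by blast
    then show ?case using tw_succ[of s t0 j] by (simp add: distrib_left)
  next
    case (step2 j)
    have "(tw s t0 j, int s * j) \<otimes>\<^bsub>KG\<^esub> inv\<^bsub>KG\<^esub> (t0, int s) \<in> H" using step2 t0 m iv by blast
    then show ?case using tw_pred[of s t0 j] by (simp add: right_diff_distrib)
  qed
  have "H = sub r s t0"
  proof
    show "H \<subseteq> sub r s t0"
    proof
      fix x assume x: "x \<in> H"
      obtain k m where km: "x = (k, m)" by fastforce
      then have "m \<in> S2" using x unfolding S2_def by auto
      then obtain j where j: "m = int s * j" using s by auto
      have "(k, m) \<otimes>\<^bsub>KG\<^esub> inv\<^bsub>KG\<^esub> (tw s t0 j, int s * j) \<in> H" using x km ej m iv by blast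
      then have "(k - tw s t0 j, 0) \<in> H" using j by (simp split: if_splits)
      then have "int r dvd (k - tw s t0 j)" using r unfolding S1_def by auto
      then show "x \<in> sub r s t0" using km j sub_mem[OF s(1)] by simp
    qed
  next
    show "sub r s t0 \<subseteq> H"
    proof
      fix x assume "x \<in> sub r s t0"
      then obtain k j where x: "x = (k, int s * j)" and dj: "int r dvd (k - tw s t0 j)"
        using sub_memE[OF _ s(1)] by blast
      have "(k - tw s t0 j, 0) \<in> H" using dj r unfolding S1_def by auto
      then have "(k - tw s t0 j, 0) \<otimes>\<^bsub>KG\<^esub> (tw s t0 j, int s * j) \<in> H" using ej m by blast
      then show "x \<in> H" using x by simp
    qed
  qed
  also have "\<dots> = sub r s (t0 mod int r)"
    by (rule sub_mod) (simp add: mod_eq_dvd_iff[symmetric])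
  finally show ?thesis using r s by (intro exI[of _ r] exI[of _ s] exI[of _ "t0 mod int r"]) auto
qed

lemma sub_inj:
  assumes r: "0 < r" and s: "0 < s" and r': "0 < r'" and s': "0 < s'"
    and t: "0 \<le> t" "t < int r" and t': "0 \<le> t'" "t' < int r'"
    and eq: "sub r s t = sub r' s' t'"
  shows "r = r' \<and> s = s' \<and> t = t'"
proof -
  have A: "(t, int s) \<in> sub r s t" "(t', int s') \<in> sub r' s' t'"
    using sub_mem[OF s, of t 1 r t] sub_mem[OF s', of t' 1 r' t'] by simp_all
  have B: "(int r, 0) \<in> sub r s t" "(int r', 0) \<in> sub r' s' t'"
    unfolding sub_def by simp_all
  have "(t, int s) \<in> sub r' s' t'" "(t', int s') \<in> sub r s t" using A eq by simp_all
  then have "int s' dvd int s" "int s dvd int s'" unfolding sub_def by auto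
  then have ss: "s = s'" by (simp add: dvd_antisym)
  have "(int r, 0) \<in> sub r' s' t'" "(int r', 0) \<in> sub r s t" using B eq by simp_all
  then have "int r' dvd int r" "int r dvd int r'" unfolding sub_def by auto
  then have rr: "r = r'" by (simp add: dvd_antisym)
  have "(t, int s) \<in> sub r s t'" using A eq ss rr by simp
  then have "int r dvd (t - t')" using sub_mem[OF s, of t 1 r t'] by simp
  then have "t = t'" using small_dvd[of "int r" "t - t'"] t t' rr by simp
  then show ?thesis using ss rr by simp
qed

definition ct :: "nat \<Rightarrow> int \<times> int \<Rightarrow> int \<Rightarrow> int" where
  "ct s g t = (if even s then (if even (snd g) then t else - t)
               else (if even (snd g) then t + 2 * fst g else 2 * fst g - t))"

lemma conj_sub_subset:
  assumes s: "0 < s"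
  shows "(\<lambda>h. g \<otimes>\<^bsub>KG\<^esub> h \<otimes>\<^bsub>KG\<^esub> inv\<^bsub>KG\<^esub> g) ` sub r s t \<subseteq> sub r s (ct s g t)"
proof
  fix y assume "y \<in> (\<lambda>h. g \<otimes>\<^bsub>KG\<^esub> h \<otimes>\<^bsub>KG\<^esub> inv\<^bsub>KG\<^esub> g) ` sub r s t"
  then obtain h where h: "h \<in> sub r s t" and y: "y = g \<otimes>\<^bsub>KG\<^esub> h \<otimes>\<^bsub>KG\<^esub> inv\<^bsub>KG\<^esub> g" by blast
  obtain k j where hk: "h = (k, int s * j)" and d: "int r dvd (k - tw s t j)"
    using sub_memE[OF h s] by blast
  obtain p q where g: "g = (p, q)" by fastforce
  define \<sigma> :: int where "\<sigma> = (if even q then 1 else -1)"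
  have y2: "snd y = int s * j" unfolding y g hk by simp
  have y1: "fst y - tw s (ct s g t) j = \<sigma> * (k - tw s t j)"
    unfolding y g hk \<sigma>_def
    by (cases "even s"; cases "even q"; cases "even j") (auto simp: tw_def ct_def algebra_simps)
  have "int r dvd (fst y - tw s (ct s g t) j)" unfolding y1 using d by simp
  then show "y \<in> sub r s (ct s g t)"
    using sub_mem[OF s, of "fst y" j r "ct s g t"] y2 by (metis prod.collapse)
qed

lemma conj_sub:
  assumes s: "0 < s"
  shows "(\<lambda>h. g \<otimes>\<^bsub>KG\<^esub> h \<otimes>\<^bsub>KG\<^esub> inv\<^bsub>KG\<^esub> g) ` sub r s t = sub r s (ct s g t)"
proof
  show "(\<lambda>h. g \<otimes>\<^bsub>KG\<^esub> h \<otimes>\<^bsub>KG\<^esub> inv\<^bsub>KG\<^esub> g) ` sub r s t \<subseteq> sub r s (ct s g t)"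
    by (rule conj_sub_subset[OF s])
next
  have ctinv: "ct s (inv\<^bsub>KG\<^esub> g) (ct s g t) = t"
    by (cases g) (auto simp: ct_def)
  show "sub r s (ct s g t) \<subseteq> (\<lambda>h. g \<otimes>\<^bsub>KG\<^esub> h \<otimes>\<^bsub>KG\<^esub> inv\<^bsub>KG\<^esub> g) ` sub r s t"
  proof
    fix y assume y: "y \<in> sub r s (ct s g t)"
    have ii: "inv\<^bsub>KG\<^esub> (inv\<^bsub>KG\<^esub> g) = g" by (rule KG.inv_inv) simp
    define h where "h = inv\<^bsub>KG\<^esub> g \<otimes>\<^bsub>KG\<^esub> y \<otimes>\<^bsub>KG\<^esub> inv\<^bsub>KG\<^esub> (inv\<^bsub>KG\<^esub> g)"
    have "h \<in> sub r s t"
      using conj_sub_subset[OF s, of "inv\<^bsub>KG\<^esub> g" r "ct s g t"] y ctinv unfolding h_def by auto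
    moreover have "y = g \<otimes>\<^bsub>KG\<^esub> h \<otimes>\<^bsub>KG\<^esub> inv\<^bsub>KG\<^esub> g"
      unfolding h_def ii
      by (metis KG.inv_closed KG.m_assoc KG.r_inv KG.r_one KG.l_inv KG.l_one KG_carrier UNIV_I KG.m_closed)
    ultimately show "y \<in> (\<lambda>h. g \<otimes>\<^bsub>KG\<^esub> h \<otimes>\<^bsub>KG\<^esub> inv\<^bsub>KG\<^esub> g) ` sub r s t" by blast
  qed
qed

definition canon :: "nat \<Rightarrow> nat \<Rightarrow> int \<Rightarrow> int" where
  "canon r s t = (if even s then min t ((- t) mod int r) else t mod (if even r then 2 else 1))"

lemma neg_mod: "0 \<le> t \<Longrightarrow> t < int r \<Longrightarrow> (- t) mod int r = (if t = 0 then 0 else int r - t)"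
  by (simp add: zmod_zminus1_eq_if)

lemma canon_ct:
  assumes r: "0 < r" and t: "0 \<le> t" "t < int r"
  shows "canon r s (ct s g t mod int r) = canon r s t"
proof (cases "even s")
  case True
  show ?thesis
  proof (cases "even (snd g)")
    case True
    then show ?thesis using \<open>even s\<close> t by (simp add: ct_def)
  next
    case False
    have "(- ((- t) mod int r)) mod int r = t"
      by (metis mod_minus_eq minus_minus mod_pos_pos_trivial t)
    then show ?thesis using \<open>even s\<close> False by (simp add: ct_def canon_def min.commute)
  qed
next
  case False
  show ?thesis
  proof (cases "even r")
    case True
    then have "(x mod int r) mod 2 = x mod 2" for x
      by (metis even_of_nat mod_mod_cancel)
    moreover have "(2 * p - t) mod 2 = t mod 2" for p :: int
      by (metis add.commute add_uminus_conv_diff minus_mod_self2 mod_add_self2 mod_minus_eq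
          mult_2 mod_mult_self4 mult.commute even_minus minus_mod_eq_mult_div mod2_eq_if)
    ultimately show ?thesis using False True by (auto simp: ct_def canon_def)
  next
    case odd: False
    then show ?thesis using False by (simp add: canon_def)
  qed
qed

lemma conj_iff:
  assumes r: "0 < r" and s: "0 < s" and r': "0 < r'" and s': "0 < s'" and rs: "r * s = r' * s'"
    and t: "0 \<le> t" "t < int r" and t': "0 \<le> t'" "t' < int r'"
  shows "conjugate_subgroups KG (sub r s t) (sub r' s' t') \<longleftrightarrow> r = r' \<and> canon r s t = canon r' s' t'"
proof
  assume "conjugate_subgroups KG (sub r s t) (sub r' s' t')"
  then obtain g where "sub r' s' t' = (\<lambda>h. g \<otimes>\<^bsub>KG\<^esub> h \<otimes>\<^bsub>KG\<^esub> inv\<^bsub>KG\<^esub> g) ` sub r s t"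
    unfolding conjugate_subgroups_def by blast
  also have "\<dots> = sub r s (ct s g t)" by (rule conj_sub[OF s])
  also have "\<dots> = sub r s (ct s g t mod int r)"
    by (rule sub_mod) (simp add: mod_eq_dvd_iff[symmetric])
  finally have eq: "sub r' s' t' = sub r s (ct s g t mod int r)" .
  have "0 \<le> ct s g t mod int r" "ct s g t mod int r < int r" using r by simp_all
  then have "r' = r \<and> s' = s \<and> t' = ct s g t mod int r"
    using sub_inj[OF r' s' r s t' _ _ eq] by blast
  then show "r = r' \<and> canon r s t = canon r' s' t'" using canon_ct[OF r t] by simp
next
  assume A: "r = r' \<and> canon r s t = canon r' s' t'"
  then have rr: "r' = r" and ss: "s' = s" using rs r by auto
  have c: "canon r s t = canon r s t'" using A rr ss by simp
  have "\<exists>g. int r dvd (ct s g t - t')"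
  proof (cases "even s")
    case True
    then have "min t ((- t) mod int r) = min t' ((- t') mod int r)"
      using c by (simp add: canon_def)
    then have "t = t' \<or> t + t' = int r" using neg_mod[OF t] neg_mod[of t' r] t' rr t
      by (auto split: if_splits simp: min_def)
    then show ?thesis
    proof
      assume "t = t'" then show ?thesis using True by (intro exI[of _ "(0, 0)"]) (simp add: ct_def)
    next
      assume "t + t' = int r"
      then have "- t - t' = - int r" by simp
      then show ?thesis using True by (intro exI[of _ "(0, 1)"]) (simp add: ct_def)
    qed
  next
    case False
    show ?thesis
    proof (cases "even r")
      case True
      then have "t mod 2 = t' mod 2" using c False by (simp add: canon_def)
      then have "even (t' - t)" by (simp add: mod_eq_dvd_iff[symmetric] dvd_diff_commute)
      then have "t + 2 * ((t' - t) div 2) - t' = 0" by simp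
      then show ?thesis using False by (intro exI[of _ "((t' - t) div 2, 0)"]) (simp add: ct_def)
    next
      case odd: False
      then have "odd (int r)" by simp
      then have "2 * ((int r + 1) div 2) = int r + 1" by presburger
      then have "t + 2 * ((t' - t) * ((int r + 1) div 2)) - t' = (t' - t) * int r"
        by (simp add: algebra_simps)
      then show ?thesis using False
        by (intro exI[of _ "((t' - t) * ((int r + 1) div 2), 0)"]) (simp add: ct_def)
    qed
  qed
  then obtain g where g: "int r dvd (ct s g t - t')" by blast
  have "sub r' s' t' = sub r s (ct s g t)"
    using sub_mod[OF g] rr ss by simp
  also have "\<dots> = (\<lambda>h. g \<otimes>\<^bsub>KG\<^esub> h \<otimes>\<^bsub>KG\<^esub> inv\<^bsub>KG\<^esub> g) ` sub r s t" by (rule conj_sub[OF s, symmetric])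
  finally show "conjugate_subgroups KG (sub r s t) (sub r' s' t')"
    unfolding conjugate_subgroups_def KG_carrier by blast
qed

definition cnt :: "nat \<Rightarrow> nat \<Rightarrow> nat" where
  "cnt r s = (if even s then r div 2 + 1 else if even r then 2 else 1)"

lemma a_double: "klein_a_seq (2 * r) = r div 2 + 1 + (if odd r then 1 else 0)"
proof (cases "even r")
  case True
  then obtain k where k: "r = 2 * k" by blast
  have "2 * r = 4 * k" using k by simp
  moreover have "(4 * k + 4) div 4 = k + 1" by simp
  ultimately show ?thesis using k unfolding klein_a_seq_def by simp
next
  case False
  then obtain k where k: "r = 2 * k + 1" using oddE by blast
  have "2 * r = 4 * k + 2" using k by simp
  moreover have "(4 * k + 2 + 6) div 4 = k + 2" by simp
  moreover have "(4 * k + 2) mod 4 = 2" by presburger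
  ultimately show ?thesis using k unfolding klein_a_seq_def by simp
qed

lemma sum_split_pred:
  assumes "finite D"
  shows "(\<Sum>x\<in>D. f x) = (\<Sum>x\<in>{x\<in>D. P x}. f x) + (\<Sum>x\<in>{x\<in>D. \<not> P x}. f x)"
proof -
  have "D = {x\<in>D. P x} \<union> {x\<in>D. \<not> P x}" by auto
  then show ?thesis using assms
    by (metis (no_types, lifting) sum.union_disjoint finite_Un disjoint_iff mem_Collect_eq)
qed

lemma arith_identity:
  assumes n: "n \<ge> 1"
  shows "(\<Sum>r | r dvd n. cnt r (n div r)) = (\<Sum>d | d dvd n. klein_a_seq d)"
proof -
  define D where "D = {d. d dvd n}"
  have finD: "finite D" unfolding D_def using n by simp
  define E where "E = {r\<in>D. even (n div r)}"
  define Ob where "Ob = {r\<in>D. \<not> even (n div r)}"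
  define Od where "Od = {d\<in>D. odd d}"
  have finE: "finite E" "finite Ob" "finite Od" using finD unfolding E_def Ob_def Od_def by auto
  have ev: "{d\<in>D. \<not> odd d} = (\<lambda>r. 2 * r) ` E"
  proof
    show "{d\<in>D. \<not> odd d} \<subseteq> (\<lambda>r. 2 * r) ` E"
    proof
      fix d assume "d \<in> {d\<in>D. \<not> odd d}"
      then have d: "d dvd n" "even d" unfolding D_def by auto
      then obtain r where r: "d = 2 * r" by blast
      obtain c where c: "n = d * c" using d by blast
      have "n div r = 2 * c" using r c n by auto
      then have "r \<in> E" unfolding E_def D_def using r c by auto
      then show "d \<in> (\<lambda>r. 2 * r) ` E" using r by blast
    qed
  next
    show "(\<lambda>r. 2 * r) ` E \<subseteq> {d\<in>D. \<not> odd d}"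
    proof
      fix d assume "d \<in> (\<lambda>r. 2 * r) ` E"
      then obtain r where r: "d = 2 * r" "r dvd n" "even (n div r)" unfolding E_def D_def by auto
      then obtain c where "n div r = 2 * c" by blast
      then have "n = 2 * r * c" using r(2) by (metis dvd_mult_div_cancel mult.assoc mult.left_commute)
      then show "d \<in> {d\<in>D. \<not> odd d}" using r unfolding D_def by auto
    qed
  qed
  have RHS: "(\<Sum>d\<in>D. klein_a_seq d) = card Od + (\<Sum>r\<in>E. r div 2 + 1) + card {r\<in>E. odd r}"
  proof -
    have "(\<Sum>d\<in>D. klein_a_seq d) = (\<Sum>d\<in>Od. klein_a_seq d) + (\<Sum>d\<in>{d\<in>D. \<not> odd d}. klein_a_seq d)"
      unfolding Od_def by (rule sum_split_pred[OF finD])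
    also have "(\<Sum>d\<in>Od. klein_a_seq d) = card Od"
      unfolding Od_def by (simp add: klein_a_seq_def)
    also have "(\<Sum>d\<in>{d\<in>D. \<not> odd d}. klein_a_seq d) = (\<Sum>r\<in>E. klein_a_seq (2 * r))"
      unfolding ev by (subst sum.reindex) (auto simp: inj_on_def)
    also have "\<dots> = (\<Sum>r\<in>E. r div 2 + 1) + (\<Sum>r\<in>E. if odd r then 1 else 0)"
      unfolding a_double by (rule sum.distrib)
    also have "(\<Sum>r\<in>E. if odd r then 1 else 0) = card {r\<in>E. odd r}"
      using finE(1) by (simp add: sum.If_cases Int_def)
    finally show ?thesis by simp
  qed
  have LHS: "(\<Sum>r\<in>D. cnt r (n div r)) = (\<Sum>r\<in>E. r div 2 + 1) + (\<Sum>r\<in>Ob. if even r then 2 else 1)"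
  proof -
    have "(\<Sum>r\<in>D. cnt r (n div r)) = (\<Sum>r\<in>E. cnt r (n div r)) + (\<Sum>r\<in>Ob. cnt r (n div r))"
      unfolding E_def Ob_def by (rule sum_split_pred[OF finD])
    also have "(\<Sum>r\<in>E. cnt r (n div r)) = (\<Sum>r\<in>E. r div 2 + 1)"
      by (rule sum.cong) (auto simp: E_def cnt_def)
    also have "(\<Sum>r\<in>Ob. cnt r (n div r)) = (\<Sum>r\<in>Ob. if even r then 2 else 1)"
      by (rule sum.cong) (auto simp: Ob_def cnt_def)
    finally show ?thesis .
  qed
  have key: "(\<Sum>r\<in>Ob. if even r then 2 else (1::nat)) = card Od + card {r\<in>E. odd r}"
  proof (cases "even n")
    case False
    have "E = {}"
    proof -
      have "odd (n div r)" if "r dvd n" for r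
        using that False by (metis dvd_div_mult_self even_mult_iff)
      then show ?thesis unfolding E_def D_def by auto
    qed
    moreover have "Ob = D" unfolding Ob_def D_def using False
      by auto (metis dvd_div_mult_self even_mult_iff)
    moreover have "Od = D" unfolding Od_def D_def using False
      by (auto dest: dvd_trans)
    moreover have "(\<Sum>r\<in>D. if even r then 2 else (1::nat)) = (\<Sum>r\<in>D. 1)"
      using False by (intro sum.cong) (auto simp: D_def dest: dvd_trans)
    ultimately show ?thesis by simp
  next
    case True
    have Oeven: "even r" if "r \<in> Ob" for r
    proof -
      have "r * (n div r) = n" "odd (n div r)" using that unfolding Ob_def D_def by auto
      then show ?thesis using True by (metis even_mult_iff)
    qed
    have "(\<Sum>r\<in>Ob. if even r then 2 else (1::nat)) = 2 * card Ob"
      using Oeven by simp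
    moreover have "{r\<in>E. odd r} = Od"
    proof -
      have "even (n div r)" if "r dvd n" "odd r" for r
        using that True by (metis dvd_div_mult_self even_mult_iff)
      then show ?thesis unfolding E_def Od_def D_def by auto
    qed
    moreover have "card Ob = card Od"
    proof -
      have "bij_betw (\<lambda>r. n div r) Ob Od"
      proof (rule bij_betw_byWitness[where f' = "\<lambda>r. n div r"])
        show "\<forall>a\<in>Ob. n div (n div a) = a" unfolding Ob_def D_def using n
          by (auto simp: div_div_eq_right)
        show "\<forall>a\<in>Od. n div (n div a) = a" unfolding Od_def D_def using n
          by (auto simp: div_div_eq_right)
        show "(\<lambda>r. n div r) ` Ob \<subseteq> Od" unfolding Ob_def Od_def D_def
          by (auto simp: div_dvd_iff_mult)
        show "(\<lambda>r. n div r) ` Od \<subseteq> Ob" unfolding Ob_def Od_def D_def using n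
          by (auto simp: div_div_eq_right)
      qed
      then show ?thesis by (rule bij_betw_same_card)
    qed
    ultimately show ?thesis by simp
  qed
  show ?thesis using LHS RHS key unfolding D_def[symmetric] by simp
qed

lemma quot_card:
  assumes A: "A = f ` P"
    and R: "\<And>p q. p \<in> P \<Longrightarrow> q \<in> P \<Longrightarrow> (f p, f q) \<in> R \<longleftrightarrow> g p = g q"
    and closed: "\<And>x y. x \<in> A \<Longrightarrow> (x, y) \<in> R \<Longrightarrow> y \<in> A"
  shows "card (A // R) = card (g ` P)"
proof -
  define cl where "cl v = f ` {q\<in>P. g q = v}" for v
  have cls: "R `` {f p} = cl (g p)" if p: "p \<in> P" for p
  proof
    show "R `` {f p} \<subseteq> cl (g p)"
    proof
      fix y assume "y \<in> R `` {f p}"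
      then have y: "(f p, y) \<in> R" by blast
      then have "y \<in> A" using closed p A by blast
      then obtain q where q: "q \<in> P" "y = f q" using A by blast
      then have "g p = g q" using R[OF p q(1)] y by simp
      then show "y \<in> cl (g p)" using q unfolding cl_def by auto
    qed
  next
    show "cl (g p) \<subseteq> R `` {f p}"
      unfolding cl_def using R[OF p] p by auto
  qed
  have "A // R = cl ` (g ` P)"
    unfolding quotient_def A using cls by auto
  moreover have "inj_on cl (g ` P)"
  proof (rule inj_onI)
    fix v w assume v: "v \<in> g ` P" and w: "w \<in> g ` P" and eq: "cl v = cl w"
    obtain p where p: "p \<in> P" "v = g p" using v by blast
    then have "f p \<in> cl w" using eq unfolding cl_def by auto
    then obtain q where q: "q \<in> P" "g q = w" "f p = f q" unfolding cl_def by auto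
    have "(f q, f q) \<in> R" using R[OF q(1) q(1)] by simp
    then have "g p = g q" using R[OF p(1) q(1)] q(3) by simp
    then show "v = w" using p q by simp
  qed
  ultimately show ?thesis by (simp add: card_image)
qed

definition PP :: "nat \<Rightarrow> (nat \<times> nat \<times> int) set" where
  "PP n = {(r, s, t). r * s = n \<and> 0 \<le> t \<and> t < int r}"

lemma subgroups_param:
  assumes n: "n \<ge> 1"
  shows "subgroups_of_index KG n = (\<lambda>(r, s, t). sub r s t) ` PP n"
proof
  show "subgroups_of_index KG n \<subseteq> (\<lambda>(r, s, t). sub r s t) ` PP n"
  proof
    fix H assume "H \<in> subgroups_of_index KG n"
    then have sg: "subgroup H KG" and c: "card (RCOSETS KG H) = n"
      unfolding subgroups_of_index_def by auto
    then have "finite (RCOSETS KG H)" using n by (metis card.infinite not_one_le_zero)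
    then obtain r s t where rst: "0 < r" "0 < s" "0 \<le> t" "t < int r" "H = sub r s t"
      using classify[OF sg] by blast
    then have "r * s = n" using sub_index[of r s t] c by simp
    then show "H \<in> (\<lambda>(r, s, t). sub r s t) ` PP n"
      unfolding PP_def using rst by (auto intro!: image_eqI[of _ _ "(r, s, t)"])
  qed
next
  show "(\<lambda>(r, s, t). sub r s t) ` PP n \<subseteq> subgroups_of_index KG n"
  proof
    fix H assume "H \<in> (\<lambda>(r, s, t). sub r s t) ` PP n"
    then obtain r s t where rst: "r * s = n" "0 \<le> t" "t < int r" "H = sub r s t"
      unfolding PP_def by auto
    then have "0 < r" "0 < s" using n by auto
    then show "H \<in> subgroups_of_index KG n"
      unfolding subgroups_of_index_def using rst sub_subgroup sub_index by auto
  qed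
qed

lemma card_canon_img:
  assumes r: "0 < r"
  shows "card (canon r s ` {0..<int r}) = cnt r s"
proof (cases "even s")
  case True
  have "canon r s ` {0..<int r} = {0..int r div 2}"
  proof
    show "canon r s ` {0..<int r} \<subseteq> {0..int r div 2}"
    proof
      fix c assume "c \<in> canon r s ` {0..<int r}"
      then obtain t where t: "0 \<le> t" "t < int r" "c = min t ((- t) mod int r)" using True
        unfolding canon_def by auto
      then show "c \<in> {0..int r div 2}" using neg_mod[OF t(1,2)] by (auto simp: min_def)
    qed
  next
    show "{0..int r div 2} \<subseteq> canon r s ` {0..<int r}"
    proof
      fix c assume c: "c \<in> {0..int r div 2}"
      then have c': "0 \<le> c" "c < int r" using r by auto
      have "canon r s c = c" using True neg_mod[OF c'] c by (auto simp: canon_def min_def)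
      then show "c \<in> canon r s ` {0..<int r}" using c' by force
    qed
  qed
  then show ?thesis using True by (simp add: cnt_def)
next
  case False
  define m :: int where "m = (if even r then 2 else 1)"
  have m: "m \<le> int r" "0 < m" unfolding m_def using r by (auto elim!: evenE)
  have "canon r s ` {0..<int r} = {0..<m}"
  proof
    show "canon r s ` {0..<int r} \<subseteq> {0..<m}"
      using False m unfolding canon_def m_def[symmetric] by auto
  next
    show "{0..<m} \<subseteq> canon r s ` {0..<int r}"
    proof
      fix c assume c: "c \<in> {0..<m}"
      then have "canon r s c = c" using False unfolding canon_def m_def[symmetric] by auto
      then show "c \<in> canon r s ` {0..<int r}" using c m by force
    qed
  qed
  then show ?thesis using False by (simp add: cnt_def m_def)
qed

theorem proposition9p8:
  fixes n :: nat
  assumes "n \<ge> 1"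
  shows "num_conj_classes_index klein_group n = (\<Sum>d | d dvd n. klein_a_seq d)"
proof -
  let ?f = "\<lambda>(r, s, t). sub r s t"
  let ?g = "\<lambda>(r::nat, s::nat, t). (r, canon r s t)"
  let ?R = "{(H, K). conjugate_subgroups KG H K}"
  have A: "subgroups_of_index KG n = ?f ` PP n" by (rule subgroups_param[OF assms])
  have R: "(?f p, ?f q) \<in> ?R \<longleftrightarrow> ?g p = ?g q" if hp: "p \<in> PP n" and hq: "q \<in> PP n" for p q
  proof -
    obtain r s t where p: "p = (r, s, t)" "r * s = n" "0 \<le> t" "t < int r" using hp unfolding PP_def by auto
    obtain r' s' t' where q: "q = (r', s', t')" "r' * s' = n" "0 \<le> t'" "t' < int r'" using hq unfolding PP_def by auto
    have "r * s \<noteq> 0" "r' * s' \<noteq> 0" using p(2) q(2) assms by auto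
    then have pos: "0 < r" "0 < s" "0 < r'" "0 < s'" by auto
    show ?thesis using conj_iff[OF pos _ p(3,4) q(3,4)] p q by auto
  qed
  have closed: "y \<in> subgroups_of_index KG n"
    if x: "x \<in> subgroups_of_index KG n" and xy: "(x, y) \<in> ?R" for x y
  proof -
    obtain r s t where p: "x = sub r s t" "r * s = n" "0 \<le> t" "t < int r"
      using x unfolding A PP_def by auto
    have s: "0 < s" using p assms by auto
    obtain g where "y = (\<lambda>h. g \<otimes>\<^bsub>KG\<^esub> h \<otimes>\<^bsub>KG\<^esub> inv\<^bsub>KG\<^esub> g) ` x"
      using xy unfolding conjugate_subgroups_def by auto
    also have "\<dots> = sub r s (ct s g t)" using conj_sub[OF s] p by simp
    also have "\<dots> = sub r s (ct s g t mod int r)"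
      by (rule sub_mod) (simp add: mod_eq_dvd_iff[symmetric])
    finally have "y = ?f (r, s, ct s g t mod int r)" by simp
    moreover have "(r, s, ct s g t mod int r) \<in> PP n" unfolding PP_def using p s assms by auto
    ultimately show ?thesis unfolding A by blast
  qed
  have "num_conj_classes_index klein_group n = card (?g ` PP n)"
    unfolding num_conj_classes_index_def
    by (rule quot_card[OF A]) (use R closed in auto)
  also have "?g ` PP n = Sigma {r. r dvd n} (\<lambda>r. canon r (n div r) ` {0..<int r})"
  proof
    show "?g ` PP n \<subseteq> Sigma {r. r dvd n} (\<lambda>r. canon r (n div r) ` {0..<int r})"
      unfolding PP_def using assms by auto
  next
    show "Sigma {r. r dvd n} (\<lambda>r. canon r (n div r) ` {0..<int r}) \<subseteq> ?g ` PP n"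
    proof
      fix x assume "x \<in> Sigma {r. r dvd n} (\<lambda>r. canon r (n div r) ` {0..<int r})"
      then obtain r t where x: "x = (r, canon r (n div r) t)" "r dvd n" "0 \<le> t" "t < int r" by auto
      then have "(r, n div r, t) \<in> PP n" unfolding PP_def by auto
      then show "x \<in> ?g ` PP n" using x by force
    qed
  qed
  also have "card \<dots> = (\<Sum>r | r dvd n. card (canon r (n div r) ` {0..<int r}))"
    using assms by (intro card_SigmaI) auto
  also have "\<dots> = (\<Sum>r | r dvd n. cnt r (n div r))"
  proof (rule sum.cong)
    fix r assume "r \<in> {r. r dvd n}"
    then have "0 < r" using assms by (auto intro: Nat.gr0I)
    then show "card (canon r (n div r) ` {0..<int r}) = cnt r (n div r)" by (rule card_canon_img)
  qed simp
  also have "\<dots> = (\<Sum>d | d dvd n. klein_a_seq d)" by (rule arith_identity[OF assms])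
  finally show ?thesis .
qed

end
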